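(* Suppose $\hat q^{[k]}\in\Delta_\delta$ for all $k\ge1$. Then for every round $t\ge2$, all $s\in\mathcal S$, $a\in\mathcal A$, and every integer $l\ge0$, regardless of the history up to round $t-1$ (i.e. conditionally on any such history), $\Pr\big((s^t,a^t)\ne(s,a),\dots,(s^{t+l},a^{t+l})\ne(s,a)\big)\le(1-\alpha\delta)^{l+1}$.
   Context: $\mathcal S,\mathcal A$ finite; $P$ is a transition kernel with $P(s'|s,a)\ge\alpha>0$ for all $s,s',a$, and $s^{t+1}\sim P(\cdot|s^t,a^t)$. $\Delta$ is the set of $q\in\mathbb R_+^{\mathcal S\times\mathcal A\times\mathcal S}$ with $\sum_{s,a,s'}q(s,a,s')=1$ and $\sum_{s',a}q(s',a,s)=\sum_{a,s'}q(s,a,s')$ for all $s$; $\Delta_\delta=\{q\in\Delta:\sum_{s'}q(s,a,s')\ge\delta\ \forall s,a\}$ for $\delta\in(0,1)$; the policy induced by $q$ is $\pi^q(a|s)=\sum_{s'}q(s,a,s')/\sum_{a',s'}q(s,a',s')$. In algorithm IHMDP-VCG, time is divided into episodes $k=1,2,\dots$; in each round $t$ of episode $k$ the action is drawn as $a^t\sim\pi^{[k]}(\cdot|s^t)$ with $\pi^{[k]}=\pi^{\hat q^{[k]}}$, where $\hat q^{[k]}$ is determined by the history before episode $k$. *)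

theory Defs
  imports "HOL-Probability.Probability"
begin

definition Delta :: "('s::finite \<Rightarrow> 'a::finite \<Rightarrow> 's \<Rightarrow> real) set" where
  "Delta = {q. (\<forall>s a s'. 0 \<le> q s a s') \<and>
               (\<Sum>s\<in>UNIV. \<Sum>a\<in>UNIV. \<Sum>s'\<in>UNIV. q s a s') = 1 \<and>
               (\<forall>s. (\<Sum>s'\<in>UNIV. \<Sum>a\<in>UNIV. q s' a s) = (\<Sum>a\<in>UNIV. \<Sum>s'\<in>UNIV. q s a s'))}"

definition Delta_delta :: "real \<Rightarrow> ('s::finite \<Rightarrow> 'a::finite \<Rightarrow> 's \<Rightarrow> real) set" where
  "Delta_delta \<delta> = {q \<in> Delta. \<forall>s a. (\<Sum>s'\<in>UNIV. q s a s') \<ge> \<delta>}"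

definition pi_q :: "('s::finite \<Rightarrow> 'a::finite \<Rightarrow> 's \<Rightarrow> real) \<Rightarrow> 's \<Rightarrow> 'a \<Rightarrow> real" where
  "pi_q q s a = (\<Sum>s'\<in>UNIV. q s a s') / (\<Sum>a'\<in>UNIV. \<Sum>s'\<in>UNIV. q s a' s')"

definition policy_pmf :: "('s::finite \<Rightarrow> 'a::finite \<Rightarrow> 's \<Rightarrow> real) \<Rightarrow> 's \<Rightarrow> 'a pmf" where
  "policy_pmf q s = embed_pmf (pi_q q s)"

text \<open>Future trajectory: given the history h = [(s^1,a^1),...,(s^{t-1},a^{t-1})] (nonempty),
  generate the next n state-action pairs (s^t,a^t),...,(s^{t+n-1},a^{t+n-1}).
  The occupancy measure used for the action at a round is Q applied to the history
  strictly before that round (the algorithm's q-hat of the current episode is a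
  function of the history before the episode, hence of this history).\<close>

primrec traj :: "('s::finite \<Rightarrow> 'a::finite \<Rightarrow> 's pmf) \<Rightarrow> (('s \<times> 'a) list \<Rightarrow> ('s \<Rightarrow> 'a \<Rightarrow> 's \<Rightarrow> real))
                 \<Rightarrow> ('s \<times> 'a) list \<Rightarrow> nat \<Rightarrow> ('s \<times> 'a) list pmf" where
  "traj P Q h 0 = return_pmf []"
| "traj P Q h (Suc n) =
     bind_pmf (P (fst (last h)) (snd (last h))) (\<lambda>s'.
     bind_pmf (policy_pmf (Q h) s') (\<lambda>a'.
     map_pmf (\<lambda>rest. (s', a') # rest) (traj P Q (h @ [(s', a')]) n)))"

end

theory Submission
  imports Defs
begin

lemma prob_bind_finite:
  fixes M :: "'b::finite pmf"
  shows "measure_pmf.prob (bind_pmf M f) A = (\<Sum>x\<in>UNIV. pmf M x * measure_pmf.prob (f x) A)"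
proof -
  have "emeasure (measure_pmf (bind_pmf M f)) A = (\<Sum>x\<in>UNIV. emeasure (measure_pmf (f x)) A * pmf M x)"
    by (simp, rule nn_integral_measure_pmf_support) auto
  also have "\<dots> = ennreal (\<Sum>x\<in>UNIV. pmf M x * measure_pmf.prob (f x) A)"
    by (subst sum_ennreal[symmetric]) (auto simp: measure_pmf.emeasure_eq_measure ennreal_mult' mult.commute)
  finally show ?thesis
    by (simp add: measure_pmf.emeasure_eq_measure sum_nonneg)
qed

lemma policy_pmf_ge:
  fixes q :: "'s::finite \<Rightarrow> 'a::finite \<Rightarrow> 's \<Rightarrow> real"
  assumes q: "q \<in> Delta_delta \<delta>" and d: "0 < \<delta>"
  shows "pmf (policy_pmf q s) a \<ge> \<delta>"
proof -
  have nn: "\<And>s a s'. 0 \<le> q s a s'" and tot: "(\<Sum>s\<in>UNIV. \<Sum>a\<in>UNIV. \<Sum>s'\<in>UNIV. q s a s') = 1"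
    and ge: "\<And>s a. (\<Sum>s'\<in>UNIV. q s a s') \<ge> \<delta>"
    using q by (auto simp: Delta_delta_def Delta_def)
  define D where "D = (\<Sum>a'\<in>UNIV. \<Sum>s'\<in>UNIV. q s a' s')"
  have Dpos: "D \<ge> \<delta>"
  proof -
    have "(\<Sum>s'\<in>UNIV. q s a s') \<le> D" unfolding D_def
      by (rule member_le_sum) (auto intro: sum_nonneg nn)
    with ge[of s a] show ?thesis by simp
  qed
  have Dle: "D \<le> 1"
  proof -
    have "D \<le> (\<Sum>s\<in>UNIV. \<Sum>a\<in>UNIV. \<Sum>s'\<in>UNIV. q s a s')" unfolding D_def
      by (rule member_le_sum[where f="\<lambda>s. \<Sum>a\<in>UNIV. \<Sum>s'\<in>UNIV. q s a s'"]) (auto intro!: sum_nonneg nn)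
    with tot show ?thesis by simp
  qed
  have nn2: "\<And>x. 0 \<le> pi_q q s x" unfolding pi_q_def using Dpos d
    by (auto intro!: divide_nonneg_pos sum_nonneg nn simp: D_def)
  have s1: "(\<Sum>x\<in>UNIV. pi_q q s x) = 1" unfolding pi_q_def
    using Dpos d by (simp add: sum_divide_distrib[symmetric] D_def[symmetric])
  have p1: "(\<integral>\<^sup>+x. ennreal (pi_q q s x) \<partial>count_space UNIV) = 1"
    by (simp add: nn_integral_count_space_finite nn2 s1 sum_ennreal)
  have "pmf (policy_pmf q s) a = pi_q q s a"
    unfolding policy_pmf_def by (rule pmf_embed_pmf[OF nn2 p1])
  also have "\<dots> \<ge> \<delta>" unfolding pi_q_def D_def[symmetric]
  proof -
    have "\<delta> * 1 \<le> (\<Sum>s'\<in>UNIV. q s a s')" using ge[of s a] by simp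
    also have "\<delta> * D \<le> \<delta> * 1" using Dle d by simp
    hence "\<delta> * D \<le> (\<Sum>s'\<in>UNIV. q s a s')" using ge[of s a] by linarith
    thus "\<delta> \<le> (\<Sum>s'\<in>UNIV. q s a s') / D" using Dpos d by (simp add: pos_le_divide_eq)
  qed
  finally show ?thesis .
qed

lemma traj_bound:
  fixes P :: "'s::finite \<Rightarrow> 'a::finite \<Rightarrow> 's pmf"
    and Q :: "('s \<times> 'a) list \<Rightarrow> ('s \<Rightarrow> 'a \<Rightarrow> 's \<Rightarrow> real)"
  assumes al: "\<forall>x b y. pmf (P x b) y \<ge> \<alpha>"
    and d: "0 < \<delta>" "\<delta> < 1"
    and Qd: "\<forall>g. Q g \<in> Delta_delta \<delta>"
  shows "measure_pmf.prob (traj P Q h n) {xs. \<forall>x\<in>set xs. x \<noteq> (s, a)} \<le> (1 - \<alpha> * \<delta>) ^ n"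
proof (induction n arbitrary: h)
  case 0
  then show ?case by simp
next
  case (Suc n)
  define A where "A = {xs. \<forall>x\<in>set xs. x \<noteq> ((s, a)::'s \<times> 'a)}"
  define c where "c = 1 - \<alpha> * \<delta>"
  define M where "M = P (fst (last h)) (snd (last h))"
  define \<pi> where "\<pi> = policy_pmf (Q h)"
  have IH: "\<And>h. measure_pmf.prob (traj P Q h n) A \<le> c ^ n" using Suc.IH unfolding A_def c_def .
  have ale1: "\<alpha> \<le> 1" using al[rule_format, of s a s] pmf_le_1[of "P s a" s] by linarith
  have c0: "0 \<le> c" unfolding c_def using ale1 d
    by (smt (verit, ccfv_SIG) mult_le_one)
  have pa: "pmf (\<pi> s) a \<ge> \<delta>" unfolding \<pi>_def by (rule policy_pmf_ge[OF Qd[rule_format] d(1)])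
  have pm: "pmf M s \<ge> \<alpha>" unfolding M_def by (rule al[rule_format])
  have step: "measure_pmf.prob (map_pmf (\<lambda>rest. (s', a') # rest) (traj P Q (h @ [(s', a')]) n)) A
      \<le> (if (s', a') = (s, a) then 0 else c ^ n)" for s' a'
    using IH[of "h @ [(s', a')]"] by (auto simp: A_def vimage_def)
  have "measure_pmf.prob (traj P Q h (Suc n)) A =
     (\<Sum>s'\<in>UNIV. pmf M s' * (\<Sum>a'\<in>UNIV. pmf (\<pi> s') a' *
        measure_pmf.prob (map_pmf (\<lambda>rest. (s', a') # rest) (traj P Q (h @ [(s', a')]) n)) A))"
    by (simp add: prob_bind_finite M_def \<pi>_def del: measure_map_pmf)
  also have "\<dots> \<le> (\<Sum>s'\<in>UNIV. pmf M s' * (\<Sum>a'\<in>UNIV. pmf (\<pi> s') a' *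
        (if (s', a') = (s, a) then 0 else c ^ n)))"
    by (intro sum_mono mult_left_mono step pmf_nonneg sum_nonneg)
  also have "\<dots> = (\<Sum>s'\<in>UNIV. pmf M s' * (c ^ n * (1 - (if s' = s then pmf (\<pi> s) a else 0))))"
  proof (rule sum.cong[OF refl])
    fix s'
    have "(\<Sum>a'\<in>UNIV. pmf (\<pi> s') a' * (if (s', a') = (s, a) then 0 else c ^ n))
        = (\<Sum>a'\<in>UNIV. c ^ n * pmf (\<pi> s') a' - (if s' = s \<and> a' = a then c ^ n * pmf (\<pi> s') a' else 0))"
      by (intro sum.cong) auto
    also have "\<dots> = c ^ n * (\<Sum>a'\<in>UNIV. pmf (\<pi> s') a') - (if s' = s then c ^ n * pmf (\<pi> s) a else 0)"
      by (simp add: sum_subtractf sum_distrib_left[symmetric] sum.If_cases)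
    also have "\<dots> = c ^ n * (1 - (if s' = s then pmf (\<pi> s) a else 0))"
      by (simp add: sum_pmf_eq_1 algebra_simps)
    finally show "pmf M s' * (\<Sum>a'\<in>UNIV. pmf (\<pi> s') a' * (if (s', a') = (s, a) then 0 else c ^ n))
       = pmf M s' * (c ^ n * (1 - (if s' = s then pmf (\<pi> s) a else 0)))" by simp
  qed
  also have "\<dots> = c ^ n * ((\<Sum>s'\<in>UNIV. pmf M s') - pmf M s * pmf (\<pi> s) a)"
  proof -
    have "(\<Sum>s'\<in>UNIV. pmf M s' * (c ^ n * (1 - (if s' = s then pmf (\<pi> s) a else 0))))
        = (\<Sum>s'\<in>UNIV. c ^ n * pmf M s' - (if s' = s then c ^ n * (pmf M s * pmf (\<pi> s) a) else 0))"
      by (intro sum.cong) (auto simp: algebra_simps)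
    also have "\<dots> = c ^ n * (\<Sum>s'\<in>UNIV. pmf M s') - c ^ n * (pmf M s * pmf (\<pi> s) a)"
      by (simp add: sum_subtractf sum_distrib_left)
    finally show ?thesis by (simp add: algebra_simps)
  qed
  also have "\<dots> = c ^ n * (1 - pmf M s * pmf (\<pi> s) a)"
    by (simp add: sum_pmf_eq_1)
  also have "\<dots> \<le> c ^ n * c"
  proof (rule mult_left_mono)
    have "\<alpha> * \<delta> \<le> pmf M s * pmf (\<pi> s) a"
      using pm pa d ale1 by (intro mult_mono) auto
    thus "1 - pmf M s * pmf (\<pi> s) a \<le> c" unfolding c_def by simp
  qed (use c0 in simp)
  finally show ?case unfolding A_def c_def by (simp add: mult.commute)
qed

theorem lemma7:
  fixes P :: "'s::finite \<Rightarrow> 'a::finite \<Rightarrow> 's pmf"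
    and Q :: "('s \<times> 'a) list \<Rightarrow> ('s \<Rightarrow> 'a \<Rightarrow> 's \<Rightarrow> real)"
    and \<alpha> \<delta> :: real and h :: "('s \<times> 'a) list"
    and s :: 's and a :: 'a and l :: nat
  assumes "\<alpha> > 0"
    and "\<forall>x b y. pmf (P x b) y \<ge> \<alpha>"
    and "0 < \<delta>" and "\<delta> < 1"
    and "\<forall>g. Q g \<in> Delta_delta \<delta>"
    and "h \<noteq> []"
  shows "measure_pmf.prob (traj P Q h (Suc l)) {xs. \<forall>x\<in>set xs. x \<noteq> (s, a)}
           \<le> (1 - \<alpha> * \<delta>) ^ (Suc l)"
  using traj_bound[OF assms(2) assms(3) assms(4) assms(5)] by blast

end
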